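(* Let $p$ be a prime, $k\ge2$, $\varphi\in\mathbb{Z}[x]$ monic and irreducible modulo $p$, $e\ge1$ an integer, $f\in\mathbb{Z}[x]$ with $f\equiv\varphi^e+p\,l\bmod p^k$ for some $l\in\mathbb{Z}[x]$, and $a$ a positive integer with $a\le e/2$. Let $E(y)=f(x)\left(\varphi^{a(k-1)}+\varphi^{a(k-2)}(py)+\cdots+\varphi^a(py)^{k-2}+(py)^{k-1}\right)$ and $R=\mathbb{Z}[x]/\langle p^k,\varphi^{ak}\rangle$. Suppose $y=y_0+py_1+p^2y_2+\cdots+p^{k-1}y_{k-1}\in R$ is a root of $E$ in $R$, where $y_0,\dots,y_{k-1}\in\mathbb{Z}[x]$. Then for every $z\in R$, the element $y_0+py_1+\cdots+p^{k-3}y_{k-3}+p^{k-2}z$ is also a root of $E$ in $R$.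
   Context: A root of $E$ in $R$ is an element $y\in R$ with $E(y)=0$ in $R$, i.e.\ $E(y)\equiv0\bmod\langle p^k,\varphi^{ak}\rangle$. For $k=2$ the sum $y_0+\cdots+p^{k-3}y_{k-3}$ is empty. *)

theory Defs
  imports "HOL-Computational_Algebra.Polynomial" "Berlekamp_Zassenhaus.Poly_Mod"
begin

definition E_poly :: "int \<Rightarrow> nat \<Rightarrow> int poly \<Rightarrow> nat \<Rightarrow> int poly \<Rightarrow> int poly \<Rightarrow> int poly" where
  "E_poly p k \<phi> a f y = f * (\<Sum>i<k. \<phi> ^ (a * (k - 1 - i)) * (smult p y) ^ i)"

definition in_ideal_pk_phi :: "int \<Rightarrow> nat \<Rightarrow> int poly \<Rightarrow> nat \<Rightarrow> int poly \<Rightarrow> bool" where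
  "in_ideal_pk_phi p k \<phi> a g \<longleftrightarrow> (\<exists>u v. g = smult (p ^ k) u + \<phi> ^ (a * k) * v)"

definition is_root_R :: "int \<Rightarrow> nat \<Rightarrow> int poly \<Rightarrow> nat \<Rightarrow> int poly \<Rightarrow> int poly \<Rightarrow> bool" where
  "is_root_R p k \<phi> a f y \<longleftrightarrow> in_ideal_pk_phi p k \<phi> a (E_poly p k \<phi> a f y)"

end

theory Submission
  imports Defs
begin

lemma Mp_eq_decomp: "poly_mod.Mp m f = poly_mod.Mp m g \<Longrightarrow> f = g + smult m (poly_mod.Dp m f - poly_mod.Dp m g)"
proof -
  assume h: "poly_mod.Mp m f = poly_mod.Mp m g"
  define Df where "Df = poly_mod.Dp m f"
  define Dg where "Dg = poly_mod.Dp m g"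
  define M where "M = poly_mod.Mp m g"
  have 1: "f = M + smult m Df" unfolding Df_def M_def h[symmetric] by (rule poly_mod.Dp_Mp_eq)
  have 2: "g = M + smult m Dg" unfolding Dg_def M_def by (rule poly_mod.Dp_Mp_eq)
  have "f = g + smult m (Df - Dg)" using 1 2 by (simp add: smult_diff_right)
  then show ?thesis unfolding Df_def Dg_def .
qed

lemma I_add: "in_ideal_pk_phi p k \<phi> a g \<Longrightarrow> in_ideal_pk_phi p k \<phi> a h \<Longrightarrow> in_ideal_pk_phi p k \<phi> a (g + h)"
  unfolding in_ideal_pk_phi_def
proof (elim exE)
  fix u v u' v' assume "g = smult (p ^ k) u + \<phi> ^ (a * k) * v" "h = smult (p ^ k) u' + \<phi> ^ (a * k) * v'"
  then have "g + h = smult (p ^ k) (u + u') + \<phi> ^ (a * k) * (v + v')" by (simp add: algebra_simps smult_add_right)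
  then show "\<exists>u v. g + h = smult (p ^ k) u + \<phi> ^ (a * k) * v" by blast
qed

lemma I_neg: "in_ideal_pk_phi p k \<phi> a g \<Longrightarrow> in_ideal_pk_phi p k \<phi> a (- g)"
  unfolding in_ideal_pk_phi_def
proof (elim exE)
  fix u v assume "g = smult (p ^ k) u + \<phi> ^ (a * k) * v"
  then have "- g = smult (p ^ k) (- u) + \<phi> ^ (a * k) * (- v)" by simp
  then show "\<exists>u v. - g = smult (p ^ k) u + \<phi> ^ (a * k) * v" by blast
qed

lemma I_diff: "in_ideal_pk_phi p k \<phi> a g \<Longrightarrow> in_ideal_pk_phi p k \<phi> a h \<Longrightarrow> in_ideal_pk_phi p k \<phi> a (g - h)"
  using I_add[of p k \<phi> a g "- h"] I_neg[of p k \<phi> a h] by simp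

lemma I_mult: "in_ideal_pk_phi p k \<phi> a g \<Longrightarrow> in_ideal_pk_phi p k \<phi> a (h * g)"
  unfolding in_ideal_pk_phi_def
proof (elim exE)
  fix u v assume "g = smult (p ^ k) u + \<phi> ^ (a * k) * v"
  then have "h * g = smult (p ^ k) (h * u) + \<phi> ^ (a * k) * (h * v)" by (simp add: algebra_simps)
  then show "\<exists>u v. h * g = smult (p ^ k) u + \<phi> ^ (a * k) * v" by blast
qed

lemma I_pk: "in_ideal_pk_phi p k \<phi> a (smult (p ^ k) u)"
  unfolding in_ideal_pk_phi_def by (rule exI[of _ u], rule exI[of _ 0], simp)

lemma I_phi: "in_ideal_pk_phi p k \<phi> a (\<phi> ^ (a * k) * v)"
  unfolding in_ideal_pk_phi_def by (rule exI[of _ 0], rule exI[of _ v], simp)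

lemma I_zero: "in_ideal_pk_phi p k \<phi> a 0"
  using I_pk[of p k \<phi> a 0] by simp

lemma I_sum: "(\<And>i. i \<in> A \<Longrightarrow> in_ideal_pk_phi p k \<phi> a (g i)) \<Longrightarrow> in_ideal_pk_phi p k \<phi> a (\<Sum>i\<in>A. g i)"
proof (induction A rule: infinite_finite_induct)
  case (infinite A) then show ?case by (simp add: I_zero)
next
  case empty then show ?case by (simp add: I_zero)
next
  case (insert x F) then show ?case by (simp add: I_add)
qed

lemma pow_diff_fac: "\<exists>q. (y + d) ^ i - y ^ i = d * (q :: int poly)"
proof (induction i)
  case 0 then show ?case by simp
next
  case (Suc i)
  then obtain q where q: "(y + d) ^ i - y ^ i = d * q" by blast
  have q': "(y + d) ^ i = d * q + y ^ i" using q by (simp add: algebra_simps)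
  have "(y + d) ^ Suc i - y ^ Suc i = (y + d) * (d * q + y ^ i) - y * y ^ i"
    by (simp add: q')
  also have "\<dots> = d * ((y + d) * q + y ^ i)" by (simp add: algebra_simps)
  finally show ?case by blast
qed

lemma key:
  fixes p :: int and n e a :: nat and \<phi> f l m y w :: "int poly"
  assumes f: "f = \<phi> ^ e + smult p l + smult (p ^ (n + 2)) m"
    and e: "2 * a \<le> e"
  shows "in_ideal_pk_phi p (n + 2) \<phi> a (E_poly p (n + 2) \<phi> a f (y + smult (p ^ n) w) - E_poly p (n + 2) \<phi> a f y)"
proof -
  let ?k = "n + 2"
  let ?I = "in_ideal_pk_phi p ?k \<phi> a"
  have Ek: "\<And>y. E_poly p ?k \<phi> a f y = (\<Sum>i<?k. f * \<phi> ^ (a * (?k - 1 - i)) * smult (p ^ i) (y ^ i))"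
    unfolding E_poly_def sum_distrib_left by (intro sum.cong refl) (simp add: smult_power mult.assoc)
  have "E_poly p ?k \<phi> a f (y + smult (p ^ n) w) - E_poly p ?k \<phi> a f y
     = (\<Sum>i<?k. f * \<phi> ^ (a * (?k - 1 - i)) * smult (p ^ i) ((y + smult (p ^ n) w) ^ i - y ^ i))"
    unfolding Ek sum_subtractf[symmetric] by (simp add: smult_diff_right right_diff_distrib)
  also have "?I \<dots>"
  proof (rule I_sum)
    fix i assume i: "i \<in> {..<?k}"
    consider "i = 0" | "i = 1" | "i \<ge> 2" by linarith
    then show "?I (f * \<phi> ^ (a * (?k - 1 - i)) * smult (p ^ i) ((y + smult (p ^ n) w) ^ i - y ^ i))"
    proof cases
      case 1 then show ?thesis by (simp add: I_zero)
    next
      case 2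
      let ?X = "\<phi> ^ (a * n)"
      have t: "f * \<phi> ^ (a * (?k - 1 - i)) * smult (p ^ i) ((y + smult (p ^ n) w) ^ i - y ^ i)
         = f * (?X * smult (p ^ (n + 1)) w)"
        using 2 by (simp add: mult.assoc)
      have fs: "f * v = \<phi> ^ e * v + smult p (l * v) + smult (p ^ (n + 2)) (m * v)" for v
        unfolding f by (simp add: distrib_right)
      have eq1: "smult p (l * (?X * smult (p ^ (n + 1)) w)) = smult (p ^ ?k) (l * ?X * w)"
        by (simp add: mult.assoc)
      have eq2: "smult (p ^ (n + 2)) (m * (?X * smult (p ^ (n + 1)) w)) = smult (p ^ ?k) (smult (p ^ (n + 1)) (m * ?X * w))"
        by (simp add: mult.assoc)
      have eq3: "\<phi> ^ e * (?X * smult (p ^ (n + 1)) w) = \<phi> ^ (a * ?k) * (\<phi> ^ (e - 2 * a) * smult (p ^ (n + 1)) w)"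
      proof -
        have ex: "e + a * n = a * ?k + (e - 2 * a)" using e by (simp add: algebra_simps)
        have "\<phi> ^ e * (?X * smult (p ^ (n + 1)) w) = \<phi> ^ (e + a * n) * smult (p ^ (n + 1)) w"
          by (simp add: power_add mult.assoc)
        also have "\<dots> = \<phi> ^ (a * ?k) * (\<phi> ^ (e - 2 * a) * smult (p ^ (n + 1)) w)"
          unfolding ex power_add by (simp add: mult.assoc)
        finally show ?thesis .
      qed
      have "f * \<phi> ^ (a * (?k - 1 - i)) * smult (p ^ i) ((y + smult (p ^ n) w) ^ i - y ^ i)
         = f * (?X * smult (p ^ (n + 1)) w)" by (rule t)
      also have "\<dots> = \<phi> ^ (a * ?k) * (\<phi> ^ (e - 2 * a) * smult (p ^ (n + 1)) w) + smult (p ^ ?k) (l * ?X * w)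
           + smult (p ^ ?k) (smult (p ^ (n + 1)) (m * ?X * w))"
        by (simp only: fs eq1 eq2 eq3)
      finally have "f * \<phi> ^ (a * (?k - 1 - i)) * smult (p ^ i) ((y + smult (p ^ n) w) ^ i - y ^ i)
         = \<phi> ^ (a * ?k) * (\<phi> ^ (e - 2 * a) * smult (p ^ (n + 1)) w) + smult (p ^ ?k) (l * ?X * w)
           + smult (p ^ ?k) (smult (p ^ (n + 1)) (m * ?X * w))" .
      then show ?thesis using I_add[OF I_add[OF I_phi I_pk] I_pk] by metis
    next
      case 3
      obtain q where q: "(y + smult (p ^ n) w) ^ i - y ^ i = smult (p ^ n) w * q"
        using pow_diff_fac by blast
      obtain j where j: "i = 2 + j" using 3 le_Suc_ex by blast
      have "smult (p ^ i) ((y + smult (p ^ n) w) ^ i - y ^ i) = smult (p ^ ?k) (smult (p ^ j) (w * q))"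
        unfolding q by (simp add: j power_add ac_simps)
      then show ?thesis by (metis I_mult I_pk mult.assoc)
    qed
  qed
  finally show ?thesis .
qed

theorem lemma9:
  fixes p :: int and k e a :: nat and \<phi> f l :: "int poly" and ys :: "nat \<Rightarrow> int poly"
  assumes "prime p" and "k \<ge> 2"
    and "monic \<phi>" and "poly_mod.irreducible_m p \<phi>"
    and "e \<ge> 1"
    and "poly_mod.Mp (p ^ k) f = poly_mod.Mp (p ^ k) (\<phi> ^ e + smult p l)"
    and "a > 0" and "2 * a \<le> e"
    and "is_root_R p k \<phi> a f (\<Sum>i<k. smult (p ^ i) (ys i))"
  shows "\<forall>z :: int poly. is_root_R p k \<phi> a f ((\<Sum>i<k - 2. smult (p ^ i) (ys i)) + smult (p ^ (k - 2)) z)"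
proof
  fix z :: "int poly"
  obtain n where k: "k = n + 2" using assms(2) le_Suc_ex by (metis add.commute)
  define g where "g = \<phi> ^ e + smult p l"
  have f: "f = \<phi> ^ e + smult p l + smult (p ^ (n + 2)) (poly_mod.Dp (p ^ k) f - poly_mod.Dp (p ^ k) g)"
    using Mp_eq_decomp[OF assms(6)] unfolding g_def k .
  define b where "b = (\<Sum>i<n. smult (p ^ i) (ys i))"
  have y: "(\<Sum>i<k. smult (p ^ i) (ys i)) = b + smult (p ^ n) (ys n + smult p (ys (Suc n)))"
    by (simp add: k b_def numeral_2_eq_2 smult_add_right ac_simps)
  have y': "(\<Sum>i<k - 2. smult (p ^ i) (ys i)) + smult (p ^ (k - 2)) z = b + smult (p ^ n) z"
    by (simp add: k b_def)
  have d1: "in_ideal_pk_phi p k \<phi> a (E_poly p k \<phi> a f (b + smult (p ^ n) (ys n + smult p (ys (Suc n)))) - E_poly p k \<phi> a f b)"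
    using key[OF f assms(8)] k by simp
  have d2: "in_ideal_pk_phi p k \<phi> a (E_poly p k \<phi> a f (b + smult (p ^ n) z) - E_poly p k \<phi> a f b)"
    using key[OF f assms(8)] k by simp
  have r: "in_ideal_pk_phi p k \<phi> a (E_poly p k \<phi> a f (b + smult (p ^ n) (ys n + smult p (ys (Suc n)))))"
    using assms(9) y unfolding is_root_R_def by simp
  have "in_ideal_pk_phi p k \<phi> a (E_poly p k \<phi> a f (b + smult (p ^ n) z))"
    using I_add[OF I_diff[OF r d1] d2] by simp
  then show "is_root_R p k \<phi> a f ((\<Sum>i<k - 2. smult (p ^ i) (ys i)) + smult (p ^ (k - 2)) z)"
    unfolding is_root_R_def y' .
qed

end
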